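(* Let $0 < \kappa < 1$ and $\lambda = \sqrt{1 - \kappa^2}$. Let $w$ be a solution, holomorphic near $0$, of the differential equation $(w')^2 = T_6(w) - (1 - 2\kappa^2)$ with $w(0) = 0$, and put $W = 2w^2 - 1$. Then $W$ (extends to) the elliptic function determined by $$(1 + W)(6 - P) = 4 \lambda^2,$$ where $P = \wp(\,\cdot\,; G_2, G_3)$ is the Weierstrass function with invariants $G_2 = 48(1 + 8\kappa^2)$ and $G_3 = 64(1 - 20\kappa^2 - 8\kappa^4)$.
   Context: $T_6$ is the degree six Chebyshev polynomial of the first kind, $T_6(\cos t) = \cos 6t$. $\wp(\,\cdot\,; g_2, g_3)$ denotes the Weierstrass elliptic function with invariants $g_2, g_3$, i.e. the solution of $(\wp')^2 = 4\wp^3 - g_2 \wp - g_3$ with a double pole at $0$ (principal part $z^{-2}$). *)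

theory Defs
  imports "HOL-Complex_Analysis.Complex_Analysis"
begin

fun cheb_T :: "nat \<Rightarrow> 'a::comm_ring_1 \<Rightarrow> 'a" where
  "cheb_T 0 x = 1"
| "cheb_T (Suc 0) x = x"
| "cheb_T (Suc (Suc n)) x = 2 * x * cheb_T (Suc n) x - cheb_T n x"

text \<open>P agrees near 0 with the Weierstrass function with invariants g2, g3:
  it is holomorphic on a punctured disc around 0, solves
  (P')^2 = 4 P^3 - g2 P - g3 there, and has a double pole at 0 with principal
  part z^(-2), i.e. P z - 1/z^2 has a finite limit at 0.\<close>
definition is_weierstrass_p_germ :: "complex \<Rightarrow> complex \<Rightarrow> (complex \<Rightarrow> complex) \<Rightarrow> bool" where
  "is_weierstrass_p_germ g2 g3 P \<longleftrightarrow>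
     (\<exists>r>0. P holomorphic_on (ball 0 r - {0}) \<and>
        (\<forall>z \<in> ball 0 r - {0}. (deriv P z)^2 = 4 * (P z)^3 - g2 * P z - g3) \<and>
        (\<exists>c. ((\<lambda>z. P z - 1 / z^2) \<longlongrightarrow> c) (at 0)))"

end

theory Submission
  imports Defs
begin

lemma ode_derivs:
  fixes f F :: "complex \<Rightarrow> complex"
  assumes S: "open S" and F: "F holomorphic_on S" and hf: "f holomorphic_on B" and B: "open B"
    and fd: "\<forall>z\<in>B. f z \<in> S \<and> deriv f z = F (f z)"
  shows "(\<forall>z\<in>B. (deriv^^n) f z = ((\<lambda>h y. deriv h y * F y)^^n) (\<lambda>x. x) (f z)) \<and>
         ((\<lambda>h y. deriv h y * F y)^^n) (\<lambda>x. x) holomorphic_on S"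
proof (induction n)
  case 0
  then show ?case by simp
next
  case (Suc n)
  define G where "G = ((\<lambda>h y. deriv h y * F y)^^n) (\<lambda>x. x)"
  have IH1: "\<forall>z\<in>B. (deriv^^n) f z = G (f z)" and IH2: "G holomorphic_on S"
    using Suc.IH unfolding G_def by auto
  have "((\<lambda>h y. deriv h y * F y)^^Suc n) (\<lambda>x. x) = (\<lambda>y. deriv G y * F y)"
    unfolding G_def by simp
  moreover have "(\<lambda>y. deriv G y * F y) holomorphic_on S"
    using IH2 F S by (intro holomorphic_intros holomorphic_deriv)
  moreover have "(deriv^^Suc n) f z = deriv G (f z) * F (f z)" if z: "z \<in> B" for z
  proof -
    have "(deriv^^Suc n) f z = deriv ((deriv^^n) f) z" by simp
    also have "\<dots> = deriv (G \<circ> f) z"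
    proof (rule deriv_cong_ev)
      show "\<forall>\<^sub>F x in nhds z. (deriv ^^ n) f x = (G \<circ> f) x"
        using eventually_nhds_in_open[OF B z] by eventually_elim (use IH1 in auto)
    qed simp
    also have "\<dots> = deriv G (f z) * deriv f z"
    proof (rule deriv_chain)
      show "f field_differentiable at z"
        using hf B z holomorphic_on_imp_differentiable_at by blast
      show "G field_differentiable at (f z)"
        using IH2 S fd z holomorphic_on_imp_differentiable_at by blast
    qed
    finally show ?thesis using fd z by simp
  qed
  ultimately show ?case by simp
qed

lemma near1_Re:
  fixes u :: complex
  assumes "norm (u - 1) < 1/4"
  shows "0 < Re u \<and> 0 < Re (u^2)"
proof -
  have a: "\<bar>Re u - 1\<bar> < 1/4" using abs_Re_le_cmod[of "u - 1"] assms by simp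
  have b: "\<bar>Im u\<bar> < 1/4" using abs_Im_le_cmod[of "u - 1"] assms by simp
  have e: "Re (u^2) = Re u * Re u - Im u * Im u" by (simp add: power2_eq_square)
  have i1: "\<bar>Im u\<bar> * \<bar>Im u\<bar> < 1/4 * (1/4)"
    using b by (intro mult_strict_mono) auto
  have i2: "Im u * Im u < 1/16" using i1 by (simp only: abs_mult_self_eq)
  have a': "3/4 < Re u" using a by arith
  have i3: "(3/4) * (3/4) < Re u * Re u" using a'
    by (intro mult_strict_mono) auto
  show ?thesis using a' i2 i3 e by linarith
qed

lemma deriv_near:
  fixes h :: "complex \<Rightarrow> complex"
  assumes r: "r > 0" and hh: "h holomorphic_on ball 0 r" and c: "deriv h 0 \<noteq> 0"
  shows "\<exists>e>0. e \<le> r \<and> (\<forall>z\<in>ball 0 e. norm (deriv h z / deriv h 0 - 1) < 1/4)"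
proof -
  have "deriv h holomorphic_on ball 0 r" using hh by (intro holomorphic_deriv) auto
  then have "(\<lambda>z. deriv h z / deriv h 0) holomorphic_on ball 0 r"
    using c by (intro holomorphic_on_divide holomorphic_on_const) auto
  then have "continuous_on (ball 0 r) (\<lambda>z. deriv h z / deriv h 0)"
    by (rule holomorphic_on_imp_continuous_on)
  then have ic: "isCont (\<lambda>z. deriv h z / deriv h 0) 0"
    using r by (simp add: continuous_on_eq_continuous_at)
  have "\<exists>d>0. \<forall>x'. dist x' 0 < d \<longrightarrow>
      dist (deriv h x' / deriv h 0) (deriv h 0 / deriv h 0) < 1/4"
    using ic[unfolded continuous_at_eps_delta, rule_format, of "1/4"] by simp
  then obtain d where d: "d > 0" "\<forall>x'. dist x' 0 < d \<longrightarrow>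
      dist (deriv h x' / deriv h 0) (deriv h 0 / deriv h 0) < 1/4"
    by blast
  show ?thesis
    by (rule exI[of _ "min d r"]) (use d r c in \<open>auto simp: dist_norm\<close>)
qed


lemma deriv_eq_F:
  fixes f H :: "complex \<Rightarrow> complex"
  assumes r: "r > 0" and hf: "f holomorphic_on ball 0 r"
    and ef: "\<forall>z\<in>ball 0 r. (deriv f z)^2 = H (f z)" and c: "deriv f 0 \<noteq> 0"
  shows "\<exists>e>0. e \<le> r \<and> (\<forall>z\<in>ball 0 e. 0 < Re (H (f z) / (deriv f 0)^2) \<and>
            deriv f z = deriv f 0 * csqrt (H (f z) / (deriv f 0)^2))"
proof -
  obtain e where e: "e > 0" "e \<le> r" "\<forall>z\<in>ball 0 e. norm (deriv f z / deriv f 0 - 1) < 1/4"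
    using deriv_near[OF r hf c] by blast
  have "0 < Re (H (f z) / (deriv f 0)^2) \<and>
            deriv f z = deriv f 0 * csqrt (H (f z) / (deriv f 0)^2)" if z: "z \<in> ball 0 e" for z
  proof -
    define u where "u = deriv f z / deriv f 0"
    have u: "0 < Re u \<and> 0 < Re (u^2)" using near1_Re e z unfolding u_def by blast
    have zr: "z \<in> ball 0 r" using z e by auto
    have "u^2 = H (f z) / (deriv f 0)^2" unfolding u_def using ef zr by (simp add: power_divide)
    moreover have "csqrt (u^2) = u" using u by (intro csqrt_unique) auto
    ultimately show ?thesis using u c unfolding u_def by auto
  qed
  then show ?thesis using e by blast
qed

lemma ode_unique:
  fixes f g H :: "complex \<Rightarrow> complex"
  assumes r: "r > 0" and hf: "f holomorphic_on ball 0 r" and hg: "g holomorphic_on ball 0 r"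
    and hH: "H holomorphic_on UNIV"
    and ef: "\<forall>z\<in>ball 0 r. (deriv f z)^2 = H (f z)"
    and eg: "\<forall>z\<in>ball 0 r. (deriv g z)^2 = H (g z)"
    and f0: "f 0 = g 0" and d0: "deriv f 0 = deriv g 0" and c: "deriv f 0 \<noteq> 0"
  shows "\<exists>e>0. \<forall>z\<in>ball 0 e. f z = g z"
proof -
  define c0 where "c0 = deriv f 0"
  obtain e1 where e1: "e1 > 0" "e1 \<le> r" "\<forall>z\<in>ball 0 e1. 0 < Re (H (f z) / c0^2) \<and>
            deriv f z = c0 * csqrt (H (f z) / c0^2)"
    using deriv_eq_F[OF r hf ef c] unfolding c0_def by blast
  obtain e2 where e2: "e2 > 0" "e2 \<le> r" "\<forall>z\<in>ball 0 e2. 0 < Re (H (g z) / c0^2) \<and>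
            deriv g z = c0 * csqrt (H (g z) / c0^2)"
    using deriv_eq_F[OF r hg eg] c d0 unfolding c0_def by auto
  define e where "e = min e1 e2"
  define S where "S = {y. 0 < Re (H y / c0^2)}"
  define F where "F = (\<lambda>y. c0 * csqrt (H y / c0^2))"
  have contH: "continuous_on UNIV H" using hH holomorphic_on_imp_continuous_on by blast
  have "open S" unfolding S_def
    using c unfolding c0_def by (intro open_Collect_less continuous_intros contH) auto
  have "F holomorphic_on S" unfolding F_def S_def
  proof (intro holomorphic_intros holomorphic_on_csqrt')
    show "H holomorphic_on {y. 0 < Re (H y / c0\<^sup>2)}" using hH holomorphic_on_subset by blast
  qed (auto simp: complex_nonpos_Reals_iff)
  have Fe: "\<forall>z\<in>ball 0 e. f z \<in> S \<and> deriv f z = F (f z)"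
    "\<forall>z\<in>ball 0 e. g z \<in> S \<and> deriv g z = F (g z)"
    using e1 e2 unfolding e_def S_def F_def by auto
  have hfe: "f holomorphic_on ball 0 e" "g holomorphic_on ball 0 e"
    using hf hg e1 e2 unfolding e_def by (auto elim!: holomorphic_on_subset)
  have "(deriv^^n) f 0 = (deriv^^n) g 0" for n
  proof -
    have "0 \<in> ball (0::complex) e" using e1 e2 e_def by auto
    then show ?thesis
      using ode_derivs[OF \<open>open S\<close> \<open>F holomorphic_on S\<close> hfe(1) open_ball Fe(1), of n]
            ode_derivs[OF \<open>open S\<close> \<open>F holomorphic_on S\<close> hfe(2) open_ball Fe(2), of n] f0
      by simp
  qed
  then have "\<forall>z\<in>ball 0 e. f z = g z"
    using hfe holomorphic_fun_eq_on_ball by blast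
  then show ?thesis using e1 e2 e_def by (intro exI[of _ e]) auto
qed


lemma cheb6: "cheb_T 6 (x::'a::comm_ring_1) = 32*x^6 - 48*x^4 + 18*x^2 - 1"
  by (simp add: numeral_eq_Suc algebra_simps power2_eq_square power_numeral_reduce)

lemma alg6:
  fixes vv k p :: complex
  assumes "p * vv^2 = 6 * vv^2 - 2 * (1 - k^2)"
  shows "vv^6 * (4 * p^3 - 48 * (1 + 8 * k^2) * p - 64 * (1 - 20 * k^2 - 8 * k^4))
     = 4 * (2 * (1 - k^2))^2 * ((32* vv^6 - 48* vv^4 + 18* vv^2 - 1) - (1 - 2 * k^2))"
proof -
  have "vv^6 * (4 * p^3 - 48 * (1 + 8 * k^2) * p - 64 * (1 - 20 * k^2 - 8 * k^4))
     = 4 * (p * vv^2)^3 - 48 * (1 + 8 * k^2) * (p * vv^2) * vv^4 - 64 * (1 - 20 * k^2 - 8 * k^4) * vv^6"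
    by algebra
  also have "\<dots> = 4 * (6 * vv^2 - 2 * (1 - k^2))^3 - 48 * (1 + 8 * k^2) * (6 * vv^2 - 2 * (1 - k^2)) * vv^4 - 64 * (1 - 20 * k^2 - 8 * k^4) * vv^6"
    using assms by simp
  also have "\<dots> = 4 * (2 * (1 - k^2))^2 * ((32* vv^6 - 48* vv^4 + 18* vv^2 - 1) - (1 - 2 * k^2))"
    by algebra
  finally show ?thesis .
qed


theorem theorem6:
  fixes \<kappa> :: real and w :: "complex \<Rightarrow> complex" and r :: real
    and P :: "complex \<Rightarrow> complex"
  assumes "0 < \<kappa>" and "\<kappa> < 1"
    and "r > 0" and "w holomorphic_on ball 0 r"
    and "\<forall>z \<in> ball 0 r. (deriv w z)^2 = cheb_T 6 (w z) - (1 - 2 * complex_of_real \<kappa>^2)"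
    and "w 0 = 0"
    and "is_weierstrass_p_germ (48 * (1 + 8 * complex_of_real \<kappa>^2))
           (64 * (1 - 20 * complex_of_real \<kappa>^2 - 8 * complex_of_real \<kappa>^4)) P"
  shows "\<forall>\<^sub>F z in at 0.
           (1 + (2 * (w z)^2 - 1)) * (6 - P z) = 4 * complex_of_real (sqrt (1 - \<kappa>^2))^2"
proof -
  note kpos = assms(1) and klt = assms(2) and rpos = assms(3) and hw = assms(4)
    and odew = assms(5) and w0 = assms(6)
  define k where "k = complex_of_real \<kappa>"
  define a where "a = 2 * (1 - k^2)"
  define H where "H = (\<lambda>y::complex. cheb_T 6 y - (1 - 2 * k^2))"
  define c0 where "c0 = deriv w 0"
  obtain r1 cc where r1: "r1 > 0" and hP: "P holomorphic_on (ball 0 r1 - {0})"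
    and odeP: "\<forall>z \<in> ball 0 r1 - {0}. (deriv P z)^2 = 4 * (P z)^3
        - (48 * (1 + 8 * k^2)) * P z - (64 * (1 - 20 * k^2 - 8 * k^4))"
    and limP: "((\<lambda>z. P z - 1 / z^2) \<longlongrightarrow> cc) (at 0)"
    using assms(7) unfolding is_weierstrass_p_germ_def k_def by blast
  have a_ne: "a \<noteq> 0"
  proof
    assume "a = 0"
    then have "k^2 = 1" unfolding a_def by simp
    then have "\<kappa>^2 = 1" unfolding k_def by (metis of_real_eq_1_iff of_real_power)
    then show False using kpos klt by (simp add: power2_eq_1_iff)
  qed
  have hH: "H holomorphic_on UNIV" unfolding H_def cheb6 by (intro holomorphic_intros)
  have odew': "\<forall>z\<in>ball 0 r. (deriv w z)^2 = H (w z)" using odew unfolding H_def k_def by simp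
  have c0sq: "c0^2 = - a"
    using odew' rpos w0 unfolding c0_def H_def cheb6 a_def by auto
  have c0ne: "c0 \<noteq> 0" using c0sq a_ne by auto
  define R where "R = (\<lambda>z. if z = 0 then 1 else z^2 * P z)"
  have limR: "(R \<longlongrightarrow> 1) (at 0)"
  proof -
    have "((\<lambda>z. 1 + z^2 * (P z - 1 / z^2)) \<longlongrightarrow> 1 + 0^2 * cc) (at 0)"
      by (intro tendsto_intros limP)
    moreover have "\<forall>\<^sub>F z in at 0. 1 + z^2 * (P z - 1 / z^2) = R z"
      unfolding R_def eventually_at_filter by (auto simp: field_simps)
    ultimately show ?thesis by (simp add: tendsto_cong)
  qed
  have hR: "R holomorphic_on ball 0 r1"
  proof (rule no_isolated_singularity'[where K = "{0}"])
    show "(R \<longlongrightarrow> R z) (at z within ball 0 r1)" if "z \<in> {0}" for z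
      using that limR unfolding R_def by (auto intro: tendsto_within_subset)
    have "(\<lambda>z. z^2 * P z) holomorphic_on ball 0 r1 - {0}"
      by (intro holomorphic_intros hP)
    then show "R holomorphic_on ball 0 r1 - {0}"
      by (rule holomorphic_transform) (auto simp: R_def)
  qed auto
  define Q where "Q = (\<lambda>z. R z - 6 * z^2)"
  have hQ: "Q holomorphic_on ball 0 r1" unfolding Q_def by (intro holomorphic_intros hR)
  have "continuous_on (ball 0 r1) Q" using hQ by (rule holomorphic_on_imp_continuous_on)
  then have "isCont Q 0" using r1 by (simp add: continuous_on_eq_continuous_at)
  then have icQ: "\<forall>e>0. \<exists>d>0. \<forall>x'. dist x' 0 < d \<longrightarrow> dist (Q x') (Q 0) < e"
    unfolding continuous_at_eps_delta .
  have "Q 0 = 1" unfolding Q_def R_def by simp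
  then have "\<exists>d>0. \<forall>x'. dist x' 0 < d \<longrightarrow> dist (Q x') 1 < 1/2"
    using icQ[rule_format, of "1/2"] by simp
  then obtain d where d: "d > 0" "\<forall>x'. dist x' 0 < d \<longrightarrow> dist (Q x') 1 < 1/2"
    by blast
  define r3 where "r3 = min d r1"
  have r3: "r3 > 0" "r3 \<le> r1" using d r1 r3_def by auto
  have Qpos: "0 < Re (Q z)" if "z \<in> ball 0 r3" for z
  proof -
    have "dist (Q z) 1 < 1/2" using d that r3_def by (auto simp: dist_norm)
    then have "\<bar>Re (Q z) - 1\<bar> < 1/2"
      using abs_Re_le_cmod[of "Q z - 1"] by (simp add: dist_norm)
    then show ?thesis by arith
  qed
  have Qnn: "Q z \<notin> \<real>\<^sub>\<le>\<^sub>0" "Q z \<noteq> 0" if "z \<in> ball 0 r3" for z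
    using Qpos[OF that] by (auto simp: complex_nonpos_Reals_iff)
  define q where "q = (\<lambda>z. inverse (csqrt (Q z)))"
  define v where "v = (\<lambda>z. c0 * z * q z)"
  have hq: "q holomorphic_on ball 0 r3" unfolding q_def
    using hQ r3 Qnn by (intro holomorphic_intros holomorphic_on_csqrt') (auto elim: holomorphic_on_subset)
  have hv: "v holomorphic_on ball 0 r3" unfolding v_def by (intro holomorphic_intros hq)
  have v0: "v 0 = 0" unfolding v_def by simp
  have dv0: "deriv v 0 = c0"
  proof -
    have "(q has_field_derivative deriv q 0) (at 0)"
      using hq r3 by (intro holomorphic_derivI) auto
    then have "(v has_field_derivative (c0 * q 0 + c0 * 0 * deriv q 0)) (at 0)"
      unfolding v_def by (auto intro!: derivative_eq_intros)
    moreover have "q 0 = 1" unfolding q_def Q_def R_def by simp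
    ultimately show ?thesis by (simp add: DERIV_imp_deriv)
  qed
  have prod: "v z ^2 * (6 - P z) = a" if z: "z \<in> ball 0 r3 - {0}" for z
  proof -
    have zn: "z \<noteq> 0" using z by auto
    have Qz: "Q z = z^2 * P z - 6 * z^2" unfolding Q_def R_def using zn by simp
    have "q z ^2 = inverse (Q z)" unfolding q_def by (simp add: power_inverse)
    then have vsq: "v z ^2 = c0^2 * z^2 / Q z" unfolding v_def by (simp add: power_mult_distrib field_simps)
    have m: "z^2 * (6 - P z) = - Q z" using Qz by (simp add: algebra_simps)
    have "v z ^2 * (6 - P z) = c0^2 * (z^2 * (6 - P z)) / Q z" using vsq by simp
    also have "\<dots> = c0^2 * (- Q z) / Q z" using m by simp
    also have "\<dots> = -(c0^2)" using Qnn(2)[of z] z by simp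
    finally show ?thesis using c0sq by simp
  qed
  have odev: "\<forall>z\<in>ball 0 r3. (deriv v z)^2 = H (v z)"
  proof
    fix z :: complex assume z: "z \<in> ball 0 r3"
    show "(deriv v z)^2 = H (v z)"
    proof (cases "z = 0")
      case True
      then show ?thesis using odew' rpos w0 dv0 v0 unfolding c0_def by auto
    next
      case False
      define U where "U = ball 0 r3 - {0::complex}"
      have zU: "z \<in> U" using z False U_def by auto
      have oU: "open U" unfolding U_def by auto
      have zr1: "z \<in> ball 0 r1 - {0}" using zU r3 U_def by auto
      have dP: "(P has_field_derivative deriv P z) (at z)"
        using hP zr1 by (intro holomorphic_derivI) auto
      have dV: "(v has_field_derivative deriv v z) (at z)"
        using hv z by (intro holomorphic_derivI) auto
      have d1: "((\<lambda>z. v z ^2 * (6 - P z)) has_field_derivative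
          (2 * v z * deriv v z * (6 - P z) - v z^2 * deriv P z)) (at z)"
        by (rule derivative_eq_intros dV dP refl | simp)+
      have d2: "((\<lambda>z. v z ^2 * (6 - P z)) has_field_derivative 0) (at z)"
        by (rule has_field_derivative_transform_within_open[OF DERIV_const[of a "at z"] oU zU])
           (use prod U_def in auto)
      have e2: "2 * v z * deriv v z * (6 - P z) = v z^2 * deriv P z"
        using DERIV_unique[OF d1 d2] by simp
      have e1: "v z ^2 * (6 - P z) = a" using prod zU U_def by auto
      have vne: "v z \<noteq> 0" using e1 a_ne by auto
      have s1: "P z * v z^2 = 6 * v z^2 - 2 * (1 - k^2)"
        using e1 unfolding a_def by (simp add: algebra_simps)
      have s2: "deriv v z * (2 * a) = v z^3 * deriv P z"
      proof -
        have "v z^3 * deriv P z = v z * (v z^2 * deriv P z)"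
          by (simp add: power3_eq_cube power2_eq_square)
        also have "\<dots> = v z * (2 * v z * deriv v z * (6 - P z))" using e2 by simp
        also have "\<dots> = deriv v z * (2 * (v z ^2 * (6 - P z)))"
          by (simp add: algebra_simps power2_eq_square)
        also have "\<dots> = deriv v z * (2 * a)" using e1 by simp
        finally show ?thesis by simp
      qed
      have s3: "(2 * a)^2 * (deriv v z)^2 = v z^6 * (deriv P z)^2"
      proof -
        have "(deriv v z * (2 * a))^2 = (v z^3 * deriv P z)^2" using s2 by simp
        then show ?thesis by (simp add: power_mult_distrib algebra_simps flip: power_mult)
      qed
      have s4: "v z^6 * (deriv P z)^2 = 4 * a^2 * H (v z)"
        using alg6[OF s1] odeP zr1 unfolding H_def cheb6 a_def by simp
      show ?thesis using s3 s4 a_ne by (simp add: power_mult_distrib)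
    qed
  qed
  define r4 where "r4 = min r r3"
  have r4: "r4 > 0" using r3 rpos r4_def by auto
  obtain e where e: "e > 0" "\<forall>z\<in>ball 0 e. w z = v z"
  proof -
    have "\<exists>e>0. \<forall>z\<in>ball 0 e. w z = v z"
    proof (rule ode_unique[OF r4 _ _ hH])
      show "w holomorphic_on ball 0 r4" using hw r4_def by (auto elim: holomorphic_on_subset)
      show "v holomorphic_on ball 0 r4" using hv r4_def by (auto elim: holomorphic_on_subset)
      show "\<forall>z\<in>ball 0 r4. (deriv w z)\<^sup>2 = H (w z)" using odew' r4_def by auto
      show "\<forall>z\<in>ball 0 r4. (deriv v z)\<^sup>2 = H (v z)" using odev r4_def by auto
    qed (use w0 v0 dv0 c0ne c0_def in auto)
    then show ?thesis using that by blast
  qed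
  have fin: "complex_of_real (sqrt (1 - \<kappa>^2))^2 = 1 - k^2"
  proof -
    have "sqrt (1 - \<kappa>^2)^2 = 1 - \<kappa>^2" using kpos klt
      by (simp add: abs_less_iff power2_less_1_iff less_imp_le power_le_one)
    then show ?thesis unfolding k_def by (metis of_real_1 of_real_diff of_real_power)
  qed
  have main: "(1 + (2 * (w z)^2 - 1)) * (6 - P z) = 4 * complex_of_real (sqrt (1 - \<kappa>^2))^2"
    if z: "z \<noteq> 0" "dist z 0 < min e r3" for z :: complex
  proof -
    have wv: "w z = v z" using e z by auto
    have pr: "v z^2 * (6 - P z) = a" using prod z by auto
    have "(1 + (2 * (w z)^2 - 1)) * (6 - P z) = 2 * (v z^2 * (6 - P z))"
      using wv by (simp add: algebra_simps)
    also have "\<dots> = 2 * a" using pr by simp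
    also have "\<dots> = 4 * complex_of_real (sqrt (1 - \<kappa>^2))^2"
      unfolding fin a_def by simp
    finally show ?thesis .
  qed
  have "0 < min e r3" using e r3 by auto
  then show ?thesis unfolding eventually_at using main by blast
qed

end
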